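(* Let $n=2$ (a qubit) with reference basis $\{|1\rangle,|2\rangle\}$, and let $Z_1,Z_2$ be Hermitian operators diagonal in this basis with $\operatorname{tr}Z_jZ_k=\delta_{jk}$. Define, for a qubit state $\rho$, \[ \mathcal{C}(\rho):=\min_{\{p_l,|\psi_l\rangle\}}\sum_lp_l\,\mathcal{F}_1\Big(e^{i(\theta_1Z_1+\theta_2Z_2)}|\psi_l\rangle\langle\psi_l|e^{-i(\theta_1Z_1+\theta_2Z_2)}\Big), \] the minimum over all ensemble decompositions $\rho=\sum_lp_l|\psi_l\rangle\langle\psi_l|$. Then \[ \mathcal{C}(\rho)=(\operatorname{tr}\sigma_1\rho)^2+(\operatorname{tr}\sigma_2\rho)^2, \] where $\sigma_1,\sigma_2$ are the Pauli $x$ and $y$ matrices with respect to the reference basis.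
   Context: The arithmetic-mean QFI of a two-parameter family $\varrho_\theta$ is $\mathcal{F}_1(\varrho_\theta):=\frac12\operatorname{tr}F(\varrho_\theta)$, with $F$ the SLD-based QFI matrix $[F]_{jk}=\operatorname{Re}\operatorname{tr}(L_jL_k\varrho_\theta)$, $L_j$ Hermitian with $\partial_j\varrho_\theta=(L_j\varrho_\theta+\varrho_\theta L_j)/2$. *)

theory Defs
  imports "HOL-Analysis.Analysis"
begin

text \<open>Qubit operators are 2x2 complex matrices, type complex^2^2.
  The reference basis vectors |1>, |2> correspond to the indices (1::2) and (2::2).\<close>

type_synonym qmat = "complex^2^2"
type_synonym qvec = "complex^2"

definition cmult :: "complex \<Rightarrow> qmat \<Rightarrow> qmat" where
  "cmult c A = (\<chi> i j. c * A$i$j)"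

definition adj :: "qmat \<Rightarrow> qmat" where
  "adj A = (\<chi> i j. cnj (A$j$i))"

definition hermitian :: "qmat \<Rightarrow> bool" where
  "hermitian A \<longleftrightarrow> adj A = A"

definition diagonal_mat :: "qmat \<Rightarrow> bool" where
  "diagonal_mat A \<longleftrightarrow> (\<forall>i j. i \<noteq> j \<longrightarrow> A$i$j = 0)"

definition psd :: "qmat \<Rightarrow> bool" where
  "psd A \<longleftrightarrow> (\<forall>v::qvec. 0 \<le> Re (\<Sum>i\<in>UNIV. \<Sum>j\<in>UNIV. cnj (v$i) * A$i$j * v$j))"

definition density_op :: "qmat \<Rightarrow> bool" where
  "density_op \<rho> \<longleftrightarrow> hermitian \<rho> \<and> psd \<rho> \<and> trace \<rho> = 1"

fun mpow :: "qmat \<Rightarrow> nat \<Rightarrow> qmat" where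
  "mpow A 0 = mat 1"
| "mpow A (Suc n) = A ** mpow A n"

definition mexp :: "qmat \<Rightarrow> qmat" where
  "mexp A = (\<Sum>n. (1 / fact n) *\<^sub>R mpow A n)"

definition proj :: "qvec \<Rightarrow> qmat" where
  "proj \<psi> = (\<chi> i j. \<psi>$i * cnj (\<psi>$j))"

definition unit_vec :: "qvec \<Rightarrow> bool" where
  "unit_vec \<psi> \<longleftrightarrow> (\<Sum>i\<in>UNIV. (cmod (\<psi>$i))^2) = 1"

definition pd1 :: "(real \<Rightarrow> real \<Rightarrow> qmat) \<Rightarrow> real \<Rightarrow> real \<Rightarrow> qmat" where
  "pd1 f t1 t2 = vector_derivative (\<lambda>s. f s t2) (at t1)"

definition pd2 :: "(real \<Rightarrow> real \<Rightarrow> qmat) \<Rightarrow> real \<Rightarrow> real \<Rightarrow> qmat" where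
  "pd2 f t1 t2 = vector_derivative (\<lambda>s. f t1 s) (at t2)"

definition is_sld :: "qmat \<Rightarrow> qmat \<Rightarrow> qmat \<Rightarrow> bool" where
  "is_sld \<rho> D L \<longleftrightarrow> hermitian L \<and> D = (1/2) *\<^sub>R (L ** \<rho> + \<rho> ** L)"

definition sld :: "qmat \<Rightarrow> qmat \<Rightarrow> qmat" where
  "sld \<rho> D = (SOME L. is_sld \<rho> D L)"

definition qfi :: "(real \<Rightarrow> real \<Rightarrow> qmat) \<Rightarrow> real \<Rightarrow> real \<Rightarrow> nat \<Rightarrow> nat \<Rightarrow> real" where
  "qfi f t1 t2 j k =
     (let L = (\<lambda>m. sld (f t1 t2) (if m = 1 then pd1 f t1 t2 else pd2 f t1 t2))
      in Re (trace (L j ** L k ** f t1 t2)))"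

definition qfi_mean :: "(real \<Rightarrow> real \<Rightarrow> qmat) \<Rightarrow> real \<Rightarrow> real \<Rightarrow> real" where
  "qfi_mean f t1 t2 = (qfi f t1 t2 1 1 + qfi f t1 t2 2 2) / 2"

definition enc_family :: "qmat \<Rightarrow> qmat \<Rightarrow> qvec \<Rightarrow> real \<Rightarrow> real \<Rightarrow> qmat" where
  "enc_family Z1 Z2 \<psi> t1 t2 =
     mexp (cmult \<i> (t1 *\<^sub>R Z1 + t2 *\<^sub>R Z2)) ** proj \<psi> **
     mexp (cmult (- \<i>) (t1 *\<^sub>R Z1 + t2 *\<^sub>R Z2))"

definition is_ensemble :: "qmat \<Rightarrow> (real \<times> qvec) list \<Rightarrow> bool" where
  "is_ensemble \<rho> E \<longleftrightarrow>
     (\<forall>(p, \<psi>) \<in> set E. 0 < p \<and> unit_vec \<psi>) \<and>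
     sum_list (map fst E) = 1 \<and>
     \<rho> = sum_list (map (\<lambda>(p, \<psi>). p *\<^sub>R proj \<psi>) E)"

definition ens_values :: "qmat \<Rightarrow> qmat \<Rightarrow> real \<Rightarrow> real \<Rightarrow> qmat \<Rightarrow> real set" where
  "ens_values Z1 Z2 t1 t2 \<rho> =
     {sum_list (map (\<lambda>(p, \<psi>). p * qfi_mean (enc_family Z1 Z2 \<psi>) t1 t2) E) | E. is_ensemble \<rho> E}"

text \<open>The convex-roof quantity C(rho) (a minimum; see the theorem, which asserts attainment).\<close>
definition coh :: "qmat \<Rightarrow> qmat \<Rightarrow> real \<Rightarrow> real \<Rightarrow> qmat \<Rightarrow> real" where
  "coh Z1 Z2 t1 t2 \<rho> = Inf (ens_values Z1 Z2 t1 t2 \<rho>)"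

definition sigma1 :: qmat where
  "sigma1 = (\<chi> i j. if i \<noteq> j then 1 else 0)"

definition sigma2 :: qmat where
  "sigma2 = (\<chi> i j. if i = 1 \<and> j = 2 then - \<i> else if i = 2 \<and> j = 1 then \<i> else 0)"

end

theory Submission
  imports Defs
begin


definition ip :: "qvec \<Rightarrow> qvec \<Rightarrow> complex" where
  "ip u v = (\<Sum>i\<in>UNIV. cnj (u$i) * v$i)"

lemma ip2: "ip u v = cnj (u$1) * v$1 + cnj (u$2) * v$2"
  by (simp add: ip_def sum_2)

lemma mv2: "((A::qmat) *v v) $ i = A$i$1 * v$1 + A$i$2 * v$2"
  by (simp add: matrix_vector_mult_def sum_2)

lemma mm2: "((A::qmat) ** B) $ i $ j = A$i$1 * B$1$j + A$i$2 * B$2$j"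
  by (simp add: matrix_matrix_mult_def sum_2)

lemma tr2: "trace (A::qmat) = A$1$1 + A$2$2"
  by (simp add: trace_def sum_2)

lemma vec2_eq: "(x::'a^2) = y \<longleftrightarrow> x$1 = y$1 \<and> x$2 = y$2"
  by (simp add: vec_eq_iff forall_2)

lemma mat2_eq: "(A::'a^2^2) = B \<longleftrightarrow> A$1$1 = B$1$1 \<and> A$1$2 = B$1$2 \<and> A$2$1 = B$2$1 \<and> A$2$2 = B$2$2"
  by (simp add: vec_eq_iff forall_2)

lemma herm_entries: "hermitian L \<Longrightarrow> cnj (L$i$j) = L$j$i"
  unfolding hermitian_def adj_def vec_eq_iff by simp


lemma herm_ip: assumes "hermitian L" shows "ip u (L *v v) = ip (L *v u) v"
proof -
  have h: "\<And>i j. cnj (L$i$j) = L$j$i" using herm_entries[OF assms] .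
  show ?thesis unfolding ip2 mv2 by (simp add: h algebra_simps)
qed

lemma proj_mv: "proj \<phi> *v v = ip \<phi> v *s \<phi>"
  unfolding vec2_eq mv2 ip2 by (simp add: proj_def algebra_simps)

lemma trace_proj: "trace (A ** proj \<phi>) = ip \<phi> (A *v \<phi>)"
  unfolding tr2 mm2 ip2 mv2 by (simp add: proj_def algebra_simps)

lemma mv_add: "((A::qmat) + B) *v v = A *v v + B *v v"
  by (simp add: vec2_eq mv2 algebra_simps)

lemma mv_scaleR: "((c::real) *\<^sub>R (A::qmat)) *v v = c *\<^sub>R (A *v v)"
  by (simp add: vec2_eq mv2 algebra_simps)

lemma sld_pure:
  assumes u: "ip \<phi> \<phi> = 1" and s: "is_sld (proj \<phi>) D L" and z: "ip \<phi> (D *v \<phi>) = 0"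
  shows "trace (L ** L ** proj \<phi>) = 4 * ip (D *v \<phi>) (D *v \<phi>)"
proof -
  have hL: "hermitian L" and hD: "D = (1/2) *\<^sub>R (L ** proj \<phi> + proj \<phi> ** L)"
    using s unfolding is_sld_def by auto
  define c where "c = ip \<phi> (L *v \<phi>)"
  have 1: "D *v \<phi> = (1/2) *\<^sub>R (L *v \<phi> + c *s \<phi>)"
  proof -
    have "D *v \<phi> = (1/2) *\<^sub>R (L *v (proj \<phi> *v \<phi>) + proj \<phi> *v (L *v \<phi>))"
      unfolding hD mv_scaleR mv_add matrix_vector_mul_assoc ..
    also have "\<dots> = (1/2) *\<^sub>R (L *v \<phi> + c *s \<phi>)"
      unfolding proj_mv u c_def by simp
    finally show ?thesis .
  qed
  have "ip \<phi> (D *v \<phi>) = (1/2) * (c + c * ip \<phi> \<phi>)"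
    unfolding 1 ip2 c_def by simp (simp add: scaleR_conv_of_real algebra_simps)
  then have c0: "c = 0" using u z by simp
  have 2: "L *v \<phi> = 2 *\<^sub>R (D *v \<phi>)" using 1 c0 by simp
  have "trace (L ** L ** proj \<phi>) = ip \<phi> (L *v (L *v \<phi>))"
    unfolding trace_proj by (simp add: matrix_vector_mul_assoc)
  also have "\<dots> = ip (L *v \<phi>) (L *v \<phi>)" using herm_ip[OF hL] by simp
  also have "\<dots> = 4 * ip (D *v \<phi>) (D *v \<phi>)" unfolding 2 ip2 by simp (simp add: scaleR_conv_of_real algebra_simps)
  finally show ?thesis .
qed

definition comm :: "(2 \<Rightarrow> real) \<Rightarrow> qmat \<Rightarrow> qmat" where
  "comm a P = (\<chi> i j. \<i> * of_real (a i - a j) * P$i$j)"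

lemma comm_herm: "hermitian (comm a (proj \<phi>))"
  by (simp add: hermitian_def mat2_eq adj_def comm_def proj_def algebra_simps)

lemma comm_sld_eq:
  assumes u: "ip \<phi> \<phi> = 1"
  shows "comm a (proj \<phi>) = comm a (proj \<phi>) ** proj \<phi> + proj \<phi> ** comm a (proj \<phi>)"
proof -
  have u': "cnj (\<phi>$1) * \<phi>$1 + cnj (\<phi>$2) * \<phi>$2 = 1" using u by (simp add: ip2)
  show ?thesis using u' by (simp add: mat2_eq mm2 comm_def proj_def) algebra
qed

lemma comm_ip0:
  assumes u: "ip \<phi> \<phi> = 1"
  shows "ip \<phi> (comm a (proj \<phi>) *v \<phi>) = 0"
  by (simp add: ip2 mv2 comm_def proj_def) algebra

lemma comm_ipD:
  assumes u: "ip \<phi> \<phi> = 1"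
  shows "ip (comm a (proj \<phi>) *v \<phi>) (comm a (proj \<phi>) *v \<phi>) = of_real ((a 1 - a 2)^2) * (cnj (\<phi>$1) * \<phi>$1) * (cnj (\<phi>$2) * \<phi>$2)"
proof -
  have u': "cnj (\<phi>$1) * \<phi>$1 + cnj (\<phi>$2) * \<phi>$2 = 1" using u by (simp add: ip2)
  have ii: "\<i> * \<i> = (-1::complex)" by simp
  show ?thesis using u' by (simp add: ip2 mv2 comm_def proj_def) (insert ii, algebra)
qed

lemma mm_scaleR_left: "((c::real) *\<^sub>R (A::qmat)) ** (B::qmat) = c *\<^sub>R (A ** B)"
  unfolding mat2_eq by (simp add: mm2 algebra_simps)

lemma mm_scaleR_right: "(A::qmat) ** ((c::real) *\<^sub>R (B::qmat)) = c *\<^sub>R (A ** B)"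
  unfolding mat2_eq by (simp add: mm2 algebra_simps)

lemma herm_scaleR: "hermitian A \<Longrightarrow> hermitian ((c::real) *\<^sub>R A)"
  unfolding hermitian_def adj_def by (simp add: vec_eq_iff)

lemma sld_comm:
  assumes u: "ip \<phi> \<phi> = 1"
  shows "is_sld (proj \<phi>) (comm a (proj \<phi>)) (sld (proj \<phi>) (comm a (proj \<phi>)))"
proof -
  let ?D = "comm a (proj \<phi>)"
  have "is_sld (proj \<phi>) ?D (2 *\<^sub>R ?D)"
    unfolding is_sld_def
  proof
    show "hermitian (2 *\<^sub>R ?D)" by (rule herm_scaleR[OF comm_herm])
    show "?D = (1/2) *\<^sub>R (2 *\<^sub>R ?D ** proj \<phi> + proj \<phi> ** 2 *\<^sub>R ?D)"
      unfolding mm_scaleR_left mm_scaleR_right scaleR_right_distrib[symmetric]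
      using comm_sld_eq[OF u, of a] by simp
  qed
  then show ?thesis unfolding sld_def by (rule someI)
qed

lemma cnj_mult_self: "cnj z * z = of_real ((cmod z)^2)"
  by (subst complex_norm_square) (simp add: mult.commute)

lemma qfi_diag:
  assumes u: "ip \<phi> \<phi> = 1" and f: "f t1 t2 = proj \<phi>" and D: "D = comm a (proj \<phi>)"
  shows "Re (trace (sld (f t1 t2) D ** sld (f t1 t2) D ** f t1 t2)) = 4 * (a 1 - a 2)^2 * (cmod (\<phi>$1))^2 * (cmod (\<phi>$2))^2"
proof -
  have "trace (sld (f t1 t2) D ** sld (f t1 t2) D ** f t1 t2) = 4 * ip (D *v \<phi>) (D *v \<phi>)"
    unfolding f D by (rule sld_pure[OF u sld_comm[OF u] comm_ip0[OF u]])
  also have "\<dots> = of_real (4 * (a 1 - a 2)^2 * (cmod (\<phi>$1))^2 * (cmod (\<phi>$2))^2)"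
    unfolding D comm_ipD[OF u] cnj_mult_self by simp
  finally show ?thesis by simp
qed

definition diag :: "(2 \<Rightarrow> complex) \<Rightarrow> qmat" where
  "diag d = (\<chi> i j. if i = j then d i else 0)"

lemma mpow_diag: "mpow (diag d) n = diag (\<lambda>i. d i ^ n)"
proof (induction n)
  case 0
  show ?case by (simp add: mat2_eq diag_def mat_def)
next
  case (Suc n)
  show ?case unfolding mpow.simps Suc.IH by (simp add: mat2_eq mm2 diag_def)
qed

lemma mexp_diag: "mexp (diag d) = diag (\<lambda>i. exp (d i))"
proof -
  have ps: "(\<Sum>m<n. (1 / fact m) *\<^sub>R mpow (diag d) m) = diag (\<lambda>i. \<Sum>m<n. d i ^ m /\<^sub>R fact m)" for n
    unfolding mpow_diag by (simp add: vec_eq_iff diag_def sum_component divide_inverse_commute)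
  have c: "\<And>i. (\<lambda>n. \<Sum>m<n. d i ^ m /\<^sub>R fact m) \<longlonglongrightarrow> exp (d i)"
    using exp_converges unfolding sums_def .
  have "(\<lambda>n. diag (\<lambda>i. \<Sum>m<n. d i ^ m /\<^sub>R fact m)) \<longlonglongrightarrow> diag (\<lambda>i. exp (d i))"
    unfolding diag_def
  proof (intro tendsto_vec_lambda)
    fix i j :: 2
    show "(\<lambda>n. if i = j then \<Sum>m<n. d i ^ m /\<^sub>R fact m else 0) \<longlonglongrightarrow> (if i = j then exp (d i) else 0)"
      using c by (cases "i = j") auto
  qed
  then have "(\<lambda>n. (1 / fact n) *\<^sub>R mpow (diag d) n) sums diag (\<lambda>i. exp (d i))"
    unfolding sums_def ps .
  then show ?thesis unfolding mexp_def by (rule sums_unique[symmetric])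
qed

definition phi :: "(2 \<Rightarrow> real) \<Rightarrow> (2 \<Rightarrow> real) \<Rightarrow> qvec \<Rightarrow> real \<Rightarrow> real \<Rightarrow> qvec" where
  "phi a b \<psi> s t = (\<chi> k. exp (\<i> * of_real (s * a k + t * b k)) * \<psi>$k)"

lemma enc_phi:
  assumes "Z1 = diag (\<lambda>k. of_real (a k))" "Z2 = diag (\<lambda>k. of_real (b k))"
  shows "enc_family Z1 Z2 \<psi> t1 t2 = proj (phi a b \<psi> t1 t2)"
proof -
  have e1: "cmult \<i> (t1 *\<^sub>R Z1 + t2 *\<^sub>R Z2) = diag (\<lambda>k. \<i> * of_real (t1 * a k + t2 * b k))"
    using assms by (simp add: mat2_eq diag_def cmult_def) (simp add: scaleR_conv_of_real algebra_simps)
  have e2: "cmult (-\<i>) (t1 *\<^sub>R Z1 + t2 *\<^sub>R Z2) = diag (\<lambda>k. cnj (\<i> * of_real (t1 * a k + t2 * b k)))"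
    using assms by (simp add: mat2_eq diag_def cmult_def) (simp add: scaleR_conv_of_real algebra_simps)
  define E where "E k = exp (\<i> * of_real (t1 * a k + t2 * b k))" for k
  have e3: "mexp (cmult (-\<i>) (t1 *\<^sub>R Z1 + t2 *\<^sub>R Z2)) = diag (\<lambda>k. cnj (E k))"
    unfolding e2 mexp_diag E_def exp_cnj ..
  have e4: "mexp (cmult \<i> (t1 *\<^sub>R Z1 + t2 *\<^sub>R Z2)) = diag E"
    unfolding e1 mexp_diag E_def ..
  have p: "phi a b \<psi> t1 t2 = (\<chi> k. E k * \<psi>$k)"
    unfolding phi_def E_def ..
  show ?thesis
    unfolding enc_family_def e3 e4 p
    by (simp add: mat2_eq mm2 diag_def proj_def algebra_simps)
qed

lemma mat_deriv:
  fixes g :: "real \<Rightarrow> qmat"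
  assumes "\<And>i j. ((\<lambda>s. g s $ i $ j) has_vector_derivative G $ i $ j) F"
  shows "(g has_vector_derivative G) F"
proof -
  define E where "E i j z = (\<chi> k l. if k = i \<and> l = j then z else (0::complex))" for i j :: 2 and z
  have bl: "bounded_linear (E i j)" for i j
    unfolding linear_conv_bounded_linear[symmetric]
    by (rule linearI) (simp_all add: vec_eq_iff E_def)
  have rep: "M = (\<Sum>i\<in>UNIV. \<Sum>j\<in>UNIV. E i j (M$i$j))" for M :: qmat
    by (simp add: mat2_eq sum_2 E_def)
  have "((\<lambda>s. \<Sum>i\<in>UNIV. \<Sum>j\<in>UNIV. E i j (g s $i$j)) has_vector_derivative
          (\<Sum>i\<in>UNIV. \<Sum>j\<in>UNIV. E i j (G$i$j))) F"
    by (intro has_vector_derivative_sum bounded_linear.has_vector_derivative[OF bl] assms)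
  moreover have "(\<lambda>s. \<Sum>i\<in>UNIV. \<Sum>j\<in>UNIV. E i j (g s $i$j)) = g"
    by (rule ext, rule rep[symmetric])
  ultimately show ?thesis using rep[of G] by simp
qed

lemma deriv_entry:
  "((\<lambda>s::real. exp (\<i> * of_real (s * \<delta> + c)) * K) has_vector_derivative
     (\<i> * (of_real \<delta> * (exp (\<i> * of_real (s0 * \<delta> + c)) * K)))) (at s0)"
proof -
  have "((\<lambda>z. exp (\<i> * (z * of_real \<delta> + of_real c)) * K) has_field_derivative
         (exp (\<i> * (of_real s0 * of_real \<delta> + of_real c)) * (\<i> * of_real \<delta>) * K)) (at (of_real s0))"
    by (auto intro!: derivative_eq_intros)
  from has_vector_derivative_real_field[OF this, of UNIV]
  show ?thesis by (simp add: algebra_simps)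
qed

lemma entry_form:
  "proj (phi a b \<psi> s t) $ i $ j = exp (\<i> * of_real (s * (a i - a j) + t * (b i - b j))) * (\<psi>$i * cnj (\<psi>$j))"
proof -
  define xi where "xi = s * a i + t * b i"
  define xj where "xj = s * a j + t * b j"
  have 1: "cnj (exp (\<i> * of_real xj)) = exp (- (\<i> * of_real xj))" by (simp add: exp_cnj)
  have 2: "exp (\<i> * of_real xi) * exp (- (\<i> * of_real xj)) = exp (\<i> * of_real (xi - xj))"
    by (simp add: mult_exp_exp algebra_simps)
  have 3: "xi - xj = s * (a i - a j) + t * (b i - b j)" unfolding xi_def xj_def by (simp add: algebra_simps)
  have "proj (phi a b \<psi> s t) $ i $ j = exp (\<i> * of_real xi) * cnj (exp (\<i> * of_real xj)) * (\<psi>$i * cnj (\<psi>$j))"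
    by (simp add: proj_def phi_def xi_def xj_def algebra_simps)
  also have "\<dots> = exp (\<i> * of_real (xi - xj)) * (\<psi>$i * cnj (\<psi>$j))" unfolding 1 2 ..
  finally show ?thesis unfolding 3 .
qed

lemma deriv_proj_phi:
  "((\<lambda>s. proj (phi a b \<psi> s t)) has_vector_derivative comm a (proj (phi a b \<psi> s0 t))) (at s0)"
proof (rule mat_deriv)
  fix i j
  show "((\<lambda>s. proj (phi a b \<psi> s t) $ i $ j) has_vector_derivative comm a (proj (phi a b \<psi> s0 t)) $ i $ j) (at s0)"
    unfolding entry_form comm_def vec_lambda_beta mult.assoc
    by (rule deriv_entry)
qed

lemma cmod_phi: "cmod (phi a b \<psi> s t $ k) = cmod (\<psi>$k)"
  by (simp add: phi_def norm_mult)

lemma ip_unit: "unit_vec \<psi> \<Longrightarrow> ip \<psi> \<psi> = 1"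
  unfolding unit_vec_def ip_def cnj_mult_self of_real_sum[symmetric] by simp

lemma unit_phi: "unit_vec \<psi> \<Longrightarrow> unit_vec (phi a b \<psi> s t)"
  unfolding unit_vec_def cmod_phi .

lemma qfi_mean_enc:
  assumes Z: "Z1 = diag (\<lambda>k. of_real (a k))" "Z2 = diag (\<lambda>k. of_real (b k))"
    and u: "unit_vec \<psi>" and ab: "(a 1 - a 2)^2 + (b 1 - b 2)^2 = 2"
  shows "qfi_mean (enc_family Z1 Z2 \<psi>) t1 t2 = 4 * (cmod (\<psi>$1))^2 * (cmod (\<psi>$2))^2"
proof -
  define f where "f = enc_family Z1 Z2 \<psi>"
  define \<phi> where "\<phi> = phi a b \<psi> t1 t2"
  have f: "f = (\<lambda>t1 t2. proj (phi a b \<psi> t1 t2))"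
    unfolding f_def using enc_phi[OF Z] by (intro ext) simp
  have u\<phi>: "ip \<phi> \<phi> = 1" unfolding \<phi>_def by (rule ip_unit[OF unit_phi[OF u]])
  have ft: "f t1 t2 = proj \<phi>" unfolding f \<phi>_def ..
  have p1: "pd1 f t1 t2 = comm a (proj \<phi>)"
    unfolding pd1_def f \<phi>_def by (rule vector_derivative_at[OF deriv_proj_phi])
  have sw: "phi a b \<psi> t1 s = phi b a \<psi> s t1" for s
    unfolding phi_def by (simp add: add.commute)
  have p2: "pd2 f t1 t2 = comm b (proj \<phi>)"
    unfolding pd2_def f \<phi>_def sw by (rule vector_derivative_at[OF deriv_proj_phi])
  have q1: "qfi f t1 t2 1 1 = 4 * (a 1 - a 2)^2 * (cmod (\<phi>$1))^2 * (cmod (\<phi>$2))^2"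
    unfolding qfi_def Let_def using qfi_diag[where f=f and ?t1.0=t1 and ?t2.0=t2, OF u\<phi> ft p1] by simp
  have q2: "qfi f t1 t2 2 2 = 4 * (b 1 - b 2)^2 * (cmod (\<phi>$1))^2 * (cmod (\<phi>$2))^2"
    unfolding qfi_def Let_def using qfi_diag[where f=f and ?t1.0=t1 and ?t2.0=t2, OF u\<phi> ft p2] by simp
  have "qfi_mean f t1 t2 = 2 * ((a 1 - a 2)^2 + (b 1 - b 2)^2) * (cmod (\<phi>$1))^2 * (cmod (\<phi>$2))^2"
    unfolding qfi_mean_def q1 q2 by (simp add: algebra_simps)
  then show ?thesis unfolding ab f_def \<phi>_def cmod_phi by simp
qed



lemma real_entry: "cnj z = z \<Longrightarrow> z = of_real (Re z)"
  by (simp add: complex_eq_iff)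

lemma Z_setup:
  assumes "hermitian Z" "diagonal_mat Z"
  shows "Z = diag (\<lambda>k. of_real (Re (Z$k$k)))"
proof -
  have "\<And>k. Z$k$k = of_real (Re (Z$k$k))" using herm_entries[OF assms(1)] real_entry by metis
  moreover have "Z$1$2 = 0" "Z$2$1 = 0" using assms(2) unfolding diagonal_mat_def by auto
  ultimately show ?thesis by (simp add: mat2_eq diag_def)
qed

lemma tr_diag: "trace (diag (\<lambda>k. of_real (a k)) ** diag (\<lambda>k. of_real (b k))) = of_real (a 1 * b 1 + a 2 * b 2)"
  by (simp add: tr2 mm2 diag_def)

lemma orth:
  assumes "(a1::real)^2 + a2^2 = 1" "b1^2+b2^2 = 1" "a1*b1+a2*b2 = 0"
  shows "(a1 - a2)^2 + (b1 - b2)^2 = 2"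
proof -
  have "a1*a2+b1*b2 = 0" using assms by algebra
  then show ?thesis using assms by (simp add: power2_eq_square algebra_simps)
qed

lemma sig_val:
  assumes "hermitian \<rho>"
  shows "(Re (trace (sigma1 ** \<rho>)))^2 + (Re (trace (sigma2 ** \<rho>)))^2 = 4 * (cmod (\<rho>$1$2))^2"
proof -
  have h: "\<rho>$2$1 = cnj (\<rho>$1$2)" using herm_entries[OF assms] by simp
  have "Re (trace (sigma1 ** \<rho>)) = 2 * Re (\<rho>$1$2)"
    by (simp add: tr2 mm2 sigma1_def h)
  moreover have "Re (trace (sigma2 ** \<rho>)) = - 2 * Im (\<rho>$1$2)"
    by (simp add: tr2 mm2 sigma2_def h)
  ultimately show ?thesis by (simp add: cmod_power2 algebra_simps)
qed

lemma psd2: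
  assumes "psd \<rho>"
  shows "0 \<le> Re (cnj x * \<rho>$1$1 * x + cnj x * \<rho>$1$2 * y + cnj y * \<rho>$2$1 * x + cnj y * \<rho>$2$2 * y)"
proof -
  have "0 \<le> Re (\<Sum>i\<in>UNIV. \<Sum>j\<in>UNIV. cnj ((\<chi> k. if k = 1 then x else y)$i) * \<rho>$i$j * (\<chi> k. if k = 1 then x else y)$j)"
    using assms unfolding psd_def by blast
  then show ?thesis by (simp add: sum_2 algebra_simps)
qed

lemma dens_facts:
  assumes "density_op \<rho>"
  defines "r \<equiv> Re (\<rho>$1$1)" and "c \<equiv> \<rho>$1$2"
  shows "\<rho>$1$1 = of_real r" "\<rho>$2$2 = of_real (1 - r)" "\<rho>$2$1 = cnj c"
    "0 \<le> r" "r \<le> 1" "(cmod c)^2 \<le> r * (1 - r)"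
proof -
  have h: "hermitian \<rho>" and p: "psd \<rho>" and t: "trace \<rho> = 1"
    using assms(1) unfolding density_op_def by auto
  show r1: "\<rho>$1$1 = of_real r" unfolding r_def by (rule real_entry[OF herm_entries[OF h, of 1 1]])
  have r2': "\<rho>$2$2 = of_real (Re (\<rho>$2$2))" by (rule real_entry[OF herm_entries[OF h, of 2 2]])
  have "Re (\<rho>$1$1 + \<rho>$2$2) = 1" using t unfolding tr2 by simp
  then have "Re (\<rho>$2$2) = 1 - r" unfolding r_def by simp
  then show r2: "\<rho>$2$2 = of_real (1 - r)" using r2' by simp
  show r3: "\<rho>$2$1 = cnj c" unfolding c_def using herm_entries[OF h] by simp
  define n where "n = (cmod c)^2"
  have cc: "c * cnj c = of_real n" "cnj c * c = of_real n"
    unfolding n_def using complex_norm_square cnj_mult_self by auto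
  have "0 \<le> Re (\<rho>$1$1)" using psd2[OF p, of 1 0] by simp
  then show "0 \<le> r" unfolding r_def .
  have "0 \<le> Re (\<rho>$2$2)" using psd2[OF p, of 0 1] by simp
  then show "r \<le> 1" using r2 by simp
  have A: "0 \<le> r * (r * (1 - r) - n)"
  proof -
    have "cnj (-c) * \<rho>$1$1 * (-c) + cnj (-c) * \<rho>$1$2 * of_real r + cnj (of_real r) * \<rho>$2$1 * (-c) + cnj (of_real r) * \<rho>$2$2 * of_real r
          = of_real (r * (r * (1 - r) - n))"
      unfolding r1 r2 r3 c_def[symmetric] using cc by simp (simp add: algebra_simps)
    then show ?thesis using psd2[OF p, of "-c" "of_real r"] by simp
  qed
  have B: "0 \<le> (1 - r) * (r * (1 - r) - n)"
  proof -
    have "cnj (of_real (1 - r)) * \<rho>$1$1 * of_real (1 - r) + cnj (of_real (1 - r)) * \<rho>$1$2 * (- cnj c) + cnj (- cnj c) * \<rho>$2$1 * of_real (1 - r) + cnj (- cnj c) * \<rho>$2$2 * (- cnj c)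
          = of_real ((1 - r) * (r * (1 - r) - n))"
      unfolding r1 r2 r3 c_def[symmetric] using cc by simp (simp add: algebra_simps)
    then show ?thesis using psd2[OF p, of "of_real (1 - r)" "- cnj c"] by simp
  qed
  show "(cmod c)^2 \<le> r * (1 - r)"
  proof (cases "r > 0")
    case True
    then show ?thesis using A unfolding n_def by (simp add: zero_le_mult_iff)
  next
    case False
    then have "1 - r > 0" by simp
    then show ?thesis using B unfolding n_def by (simp add: zero_le_mult_iff)
  qed
qed

lemma psi_props:
  fixes c u :: complex and q :: real
  assumes q: "0 \<le> q" "q \<le> 1" "q * (1 - q) = (cmod c)^2" and u: "cmod u = 1" "of_real (cmod c) * u = c"
  defines "\<psi> \<equiv> (\<chi> k. if k = 1 then of_real (sqrt q) else cnj u * of_real (sqrt (1 - q))) :: qvec"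
  shows "unit_vec \<psi>" "(cmod (\<psi>$1))^2 * (cmod (\<psi>$2))^2 = (cmod c)^2"
    "proj \<psi> = (\<chi> i j. if i = 1 then (if j = 1 then of_real q else c) else (if j = 1 then cnj c else of_real (1 - q)))"
proof -
  have c1: "(cmod (\<psi>$1))^2 = q" unfolding \<psi>_def using q by simp
  have c2: "(cmod (\<psi>$2))^2 = 1 - q" unfolding \<psi>_def using q u by (simp add: norm_mult)
  show "unit_vec \<psi>" unfolding unit_vec_def sum_2 c1 c2 by simp
  show "(cmod (\<psi>$1))^2 * (cmod (\<psi>$2))^2 = (cmod c)^2" unfolding c1 c2 using q by simp
  have sq: "sqrt q * sqrt (1 - q) = cmod c" using q by (simp add: real_sqrt_mult[symmetric])
  have uu: "cnj u * u = 1" using u cnj_mult_self[of u] by simp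
  have e12: "of_real (sqrt q) * cnj (cnj u * of_real (sqrt (1 - q))) = c"
  proof -
    have "of_real (sqrt q) * cnj (cnj u * of_real (sqrt (1 - q))) = of_real (sqrt q * sqrt (1 - q)) * u"
      by (simp add: algebra_simps)
    then show ?thesis using sq u by simp
  qed
  have e22: "cnj u * of_real (sqrt (1 - q)) * cnj (cnj u * of_real (sqrt (1 - q))) = of_real (1 - q)"
  proof -
    have "cnj u * of_real (sqrt (1 - q)) * cnj (cnj u * of_real (sqrt (1 - q))) = (cnj u * u) * (of_real (sqrt (1 - q)) * of_real (sqrt (1 - q)))"
      by (simp add: algebra_simps)
    moreover have r: "complex_of_real (sqrt (1 - q)) * complex_of_real (sqrt (1 - q)) = of_real (1 - q)"
      using q by (simp flip: of_real_mult)
    ultimately show ?thesis unfolding r uu by simp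
  qed
  have e21: "cnj u * of_real (sqrt (1 - q)) * cnj (of_real (sqrt q)) = cnj c"
    using arg_cong[OF e12, of cnj] by (simp add: algebra_simps)
  show "proj \<psi> = (\<chi> i j. if i = 1 then (if j = 1 then of_real q else c) else (if j = 1 then cnj c else of_real (1 - q)))"
  proof -
    have s1: "complex_of_real (sqrt (1 - q)) * complex_of_real (sqrt (1 - q)) = of_real (1 - q)"
      using q by (simp flip: of_real_mult)
    have s2: "complex_of_real (sqrt q) * complex_of_real (sqrt q) = of_real q"
      using q by (simp flip: of_real_mult)
    have n21: "(2::2) = 1 \<longleftrightarrow> False" by simp
    have e11: "complex_of_real (sqrt q) * cnj (complex_of_real (sqrt q)) = of_real q"
      using s2 by simp
    show ?thesis unfolding mat2_eq proj_def \<psi>_def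
      by (simp only: vec_lambda_beta if_True if_False n21 simp_thms e11 e12 e21 e22)
  qed
qed

lemma opt_ens:
  assumes d: "density_op \<rho>"
  shows "\<exists>E. is_ensemble \<rho> E \<and> (\<forall>(p, \<psi>)\<in>set E. (cmod (\<psi>$1))^2 * (cmod (\<psi>$2))^2 = (cmod (\<rho>$1$2))^2)"
proof -
  define r where "r = Re (\<rho>$1$1)"
  define c where "c = \<rho>$1$2"
  define n where "n = (cmod c)^2"
  note f = dens_facts[OF d, folded r_def c_def]
  have n0: "0 \<le> n" unfolding n_def by simp
  have nr: "n \<le> r * (1 - r)" using f(6) unfolding n_def .
  have "r * (1 - r) \<le> 1/4" using sum_power2_ge_zero[of "2*r - 1" 0]
    by (simp add: power2_eq_square algebra_simps)
  then have n4: "4 * n \<le> 1" using nr by simp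
  define s where "s = sqrt (1 - 4 * n)"
  have s0: "0 \<le> s" unfolding s_def using n4 by simp
  have ss: "s^2 = 1 - 4 * n" unfolding s_def using n4 by simp
  have s1: "s \<le> 1" unfolding s_def using n0 by simp
  have "(1 - 2 * r)^2 \<le> s^2" unfolding ss using nr by (simp add: power2_eq_square algebra_simps)
  then have ab: "\<bar>1 - 2 * r\<bar> \<le> s" using s0 by (metis abs_le_square_iff abs_of_nonneg)
  define qp where "qp = (1 + s) / 2"
  define qm where "qm = (1 - s) / 2"
  have "qp * (1 - qp) = (1 - s^2) / 4" unfolding qp_def by (simp add: power2_eq_square field_simps)
  then have qp: "0 \<le> qp" "qp \<le> 1" "qp * (1 - qp) = (cmod c)^2"
    using s0 s1 ss unfolding n_def qp_def by auto
  have "qm * (1 - qm) = (1 - s^2) / 4" unfolding qm_def by (simp add: power2_eq_square field_simps)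
  then have qm: "0 \<le> qm" "qm \<le> 1" "qm * (1 - qm) = (cmod c)^2"
    using s0 s1 ss unfolding n_def qm_def by auto
  define u where "u = (if c = 0 then 1 else c / of_real (cmod c))"
  have u: "cmod u = 1" "of_real (cmod c) * u = c"
    unfolding u_def by (auto simp: norm_divide)
  define \<psi> where "\<psi> q = ((\<chi> k. if k = 1 then of_real (sqrt q) else cnj u * of_real (sqrt (1 - q))) :: qvec)" for q
  note pp = psi_props[OF qp u, folded \<psi>_def]
  note pm = psi_props[OF qm u, folded \<psi>_def]
  define l where "l = (r - qm) / s"
  have lr: "r = qm + l * s"
  proof (cases "s = 0")
    case True
    then show ?thesis using ab unfolding l_def qm_def by simp
  next
    case False
    then show ?thesis unfolding l_def by simp
  qed
  have l0: "0 \<le> l" and l1: "l \<le> 1"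
  proof -
    show "0 \<le> l"
    proof (cases "s = 0")
      case False
      then have "s > 0" using s0 by simp
      moreover have "r - qm \<ge> 0" using ab unfolding qm_def abs_le_iff by (simp add: field_simps)
      ultimately show ?thesis unfolding l_def by simp
    qed (simp add: l_def)
    show "l \<le> 1"
    proof (cases "s = 0")
      case False
      then have "s > 0" using s0 by simp
      moreover have "r - qm \<le> s" using ab unfolding qm_def abs_le_iff by (simp add: field_simps)
      ultimately show ?thesis unfolding l_def by simp
    qed (simp add: l_def)
  qed
  have rr: "r = l * qp + (1 - l) * qm" using lr unfolding qp_def qm_def by (simp add: field_simps)
  have rho: "\<rho> = l *\<^sub>R proj (\<psi> qp) + (1 - l) *\<^sub>R proj (\<psi> qm)"
  proof -
    have r11: "\<rho>$1$1 = of_real (l * qp + (1 - l) * qm)" using f(1) rr by simp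
    have r22: "\<rho>$2$2 = of_real (l * (1 - qp) + (1 - l) * (1 - qm))" using f(2) rr by (simp add: algebra_simps)
    show ?thesis unfolding mat2_eq pp(3) pm(3)
      using r11 r22 f(3) by (simp add: c_def) (simp add: scaleR_conv_of_real algebra_simps)
  qed
  have good: "\<And>q. q \<in> {qp, qm} \<Longrightarrow> unit_vec (\<psi> q) \<and> (cmod (\<psi> q$1))^2 * (cmod (\<psi> q$2))^2 = (cmod c)^2"
    using pp pm by auto
  show ?thesis
  proof (cases "l = 0")
    case True
    show ?thesis
      by (rule exI[of _ "[(1, \<psi> qm)]"]) (use good rho True in \<open>auto simp: is_ensemble_def c_def\<close>)
  next
    case l0': False
    show ?thesis
    proof (cases "l = 1")
      case True
      show ?thesis
        by (rule exI[of _ "[(1, \<psi> qp)]"]) (use good rho True in \<open>auto simp: is_ensemble_def c_def\<close>)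
    next
      case False
      then have "0 < l" "l < 1" using l0 l1 l0' by auto
      then show ?thesis
        by (intro exI[of _ "[(l, \<psi> qp), (1 - l, \<psi> qm)]"]) (use good rho in \<open>auto simp: is_ensemble_def c_def\<close>)
    qed
  qed
qed

lemma jensen_sq:
  fixes p x :: "'i \<Rightarrow> real"
  assumes "finite I" "(\<Sum>i\<in>I. p i) = 1" "\<And>i. i \<in> I \<Longrightarrow> 0 \<le> p i"
  shows "(\<Sum>i\<in>I. p i * x i)^2 \<le> (\<Sum>i\<in>I. p i * (x i)^2)"
proof -
  define m where "m = (\<Sum>i\<in>I. p i * x i)"
  have "0 \<le> (\<Sum>i\<in>I. p i * (x i - m)^2)" using assms(3) by (intro sum_nonneg) simp
  also have "(\<Sum>i\<in>I. p i * (x i - m)^2) = (\<Sum>i\<in>I. p i * (x i)^2) - 2 * m * (\<Sum>i\<in>I. p i * x i) + m^2 * (\<Sum>i\<in>I. p i)"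
    by (simp add: power2_diff sum.distrib sum_subtractf sum_distrib_left sum_distrib_right algebra_simps)
  finally show ?thesis using assms(2) unfolding m_def[symmetric] by (simp add: power2_eq_square)
qed

lemma sl: "sum_list (map f xs) = (\<Sum>i<length xs. f (xs!i))"
  by (simp add: sum_list_sum_nth atLeast0LessThan)

lemma lower:
  assumes Z: "Z1 = diag (\<lambda>k. of_real (a k))" "Z2 = diag (\<lambda>k. of_real (b k))"
    and ab: "(a 1 - a 2)^2 + (b 1 - b 2)^2 = 2" and E: "is_ensemble \<rho> E"
  shows "4 * (cmod (\<rho>$1$2))^2 \<le> sum_list (map (\<lambda>(p, \<psi>). p * qfi_mean (enc_family Z1 Z2 \<psi>) t1 t2) E)"
proof -
  define n where "n = length E"
  define P where "P i = fst (E!i)" for i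
  define \<Psi> where "\<Psi> i = snd (E!i)" for i
  have mem: "\<And>i. i < n \<Longrightarrow> (P i, \<Psi> i) \<in> set E" unfolding n_def P_def \<Psi>_def by simp
  have pos: "\<And>i. i < n \<Longrightarrow> 0 < P i" and un: "\<And>i. i < n \<Longrightarrow> unit_vec (\<Psi> i)"
    using E mem unfolding is_ensemble_def by auto
  have sP: "(\<Sum>i<n. P i) = 1" using E unfolding is_ensemble_def sl n_def P_def by simp
  have rho: "\<rho> = (\<Sum>i<n. P i *\<^sub>R proj (\<Psi> i))"
    using E unfolding is_ensemble_def sl n_def P_def \<Psi>_def by (simp add: case_prod_beta)
  have val: "sum_list (map (\<lambda>(p, \<psi>). p * qfi_mean (enc_family Z1 Z2 \<psi>) t1 t2) E)
      = (\<Sum>i<n. P i * (4 * (cmod (\<Psi> i$1))^2 * (cmod (\<Psi> i$2))^2))"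
    unfolding sl n_def[symmetric] using qfi_mean_enc[OF Z un ab]
    by (simp add: case_prod_beta P_def[symmetric] \<Psi>_def[symmetric])
  define x where "x i = cmod (\<Psi> i$1) * cmod (\<Psi> i$2)" for i
  have r12: "\<rho>$1$2 = (\<Sum>i<n. of_real (P i) * (\<Psi> i$1 * cnj (\<Psi> i$2)))"
    by (subst rho) (simp add: sum_component proj_def, simp add: scaleR_conv_of_real)
  have "cmod (\<rho>$1$2) \<le> (\<Sum>i<n. cmod (of_real (P i) * (\<Psi> i$1 * cnj (\<Psi> i$2))))"
    unfolding r12 by (rule norm_sum)
  also have "\<dots> = (\<Sum>i<n. P i * x i)"
    using pos by (intro sum.cong) (auto simp: norm_mult x_def less_imp_le)
  finally have "(cmod (\<rho>$1$2))^2 \<le> (\<Sum>i<n. P i * x i)^2"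
    by (intro power_mono) auto
  also have "\<dots> \<le> (\<Sum>i<n. P i * (x i)^2)"
    using pos sP by (intro jensen_sq) (auto simp: less_imp_le)
  finally have "4 * (cmod (\<rho>$1$2))^2 \<le> 4 * (\<Sum>i<n. P i * (x i)^2)" by simp
  also have "\<dots> = (\<Sum>i<n. P i * (4 * (cmod (\<Psi> i$1))^2 * (cmod (\<Psi> i$2))^2))"
    unfolding sum_distrib_left x_def by (intro sum.cong) (auto simp: power_mult_distrib algebra_simps)
  finally show ?thesis unfolding val .
qed

theorem mainTheorem7:
  fixes Z1 Z2 \<rho> :: "complex^2^2" and t1 t2 :: real
  assumes "hermitian Z1" and "hermitian Z2"
    and "diagonal_mat Z1" and "diagonal_mat Z2"
    and "trace (Z1 ** Z1) = 1" and "trace (Z2 ** Z2) = 1"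
    and "trace (Z1 ** Z2) = 0" and "trace (Z2 ** Z1) = 0"
    and "density_op \<rho>"
  shows "coh Z1 Z2 t1 t2 \<rho> = (Re (trace (sigma1 ** \<rho>)))^2 + (Re (trace (sigma2 ** \<rho>)))^2
     \<and> (Re (trace (sigma1 ** \<rho>)))^2 + (Re (trace (sigma2 ** \<rho>)))^2 \<in> ens_values Z1 Z2 t1 t2 \<rho>"
proof -
  define a where "a k = Re (Z1$k$k)" for k
  define b where "b k = Re (Z2$k$k)" for k
  have Z1: "Z1 = diag (\<lambda>k. of_real (a k))" unfolding a_def by (rule Z_setup[OF assms(1,3)])
  have Z2: "Z2 = diag (\<lambda>k. of_real (b k))" unfolding b_def by (rule Z_setup[OF assms(2,4)])
  have "complex_of_real (a 1 * a 1 + a 2 * a 2) = 1" using assms(5) unfolding Z1 tr_diag .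
  then have "a 1 * a 1 + a 2 * a 2 = 1" by (rule of_real_eq_1_iff[THEN iffD1])
  then have aa: "(a 1)^2 + (a 2)^2 = 1" by (simp add: power2_eq_square)
  have "complex_of_real (b 1 * b 1 + b 2 * b 2) = 1" using assms(6) unfolding Z2 tr_diag .
  then have "b 1 * b 1 + b 2 * b 2 = 1" by (rule of_real_eq_1_iff[THEN iffD1])
  then have bb: "(b 1)^2 + (b 2)^2 = 1" by (simp add: power2_eq_square)
  have "complex_of_real (a 1 * b 1 + a 2 * b 2) = 0" using assms(7) unfolding Z1 Z2 tr_diag .
  then have abo: "a 1 * b 1 + a 2 * b 2 = 0" by (rule of_real_eq_0_iff[THEN iffD1])
  have ab: "(a 1 - a 2)^2 + (b 1 - b 2)^2 = 2" by (rule orth[OF aa bb abo])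
  have herm: "hermitian \<rho>" using assms(9) unfolding density_op_def by simp
  define T where "T = 4 * (cmod (\<rho>$1$2))^2"
  have sv: "(Re (trace (sigma1 ** \<rho>)))^2 + (Re (trace (sigma2 ** \<rho>)))^2 = T"
    unfolding T_def by (rule sig_val[OF herm])
  obtain E where E: "is_ensemble \<rho> E"
    and Eg: "\<forall>(p, \<psi>)\<in>set E. (cmod (\<psi>$1))^2 * (cmod (\<psi>$2))^2 = (cmod (\<rho>$1$2))^2"
    using opt_ens[OF assms(9)] by blast
  have "sum_list (map (\<lambda>(p, \<psi>). p * qfi_mean (enc_family Z1 Z2 \<psi>) t1 t2) E)
      = sum_list (map (\<lambda>(p, \<psi>). p * T) E)"
  proof (rule arg_cong[where f = sum_list], rule map_cong[OF refl])
    fix x assume x: "x \<in> set E"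
    obtain p \<psi> where xp: "x = (p, \<psi>)" by (cases x)
    have "unit_vec \<psi>" using E x xp unfolding is_ensemble_def by auto
    moreover have "(cmod (\<psi>$1))^2 * (cmod (\<psi>$2))^2 = (cmod (\<rho>$1$2))^2" using Eg x xp by auto
    ultimately show "(\<lambda>(p, \<psi>). p * qfi_mean (enc_family Z1 Z2 \<psi>) t1 t2) x = (\<lambda>(p, \<psi>). p * T) x"
      unfolding xp T_def using qfi_mean_enc[OF Z1 Z2 _ ab] by (simp add: algebra_simps)
  qed
  also have "\<dots> = T * sum_list (map fst E)"
    unfolding sl by (simp add: case_prod_beta sum_distrib_left mult.commute)
  also have "\<dots> = T" using E unfolding is_ensemble_def by simp
  finally have mem: "T \<in> ens_values Z1 Z2 t1 t2 \<rho>"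
    unfolding ens_values_def using E by blast
  have low: "\<And>x. x \<in> ens_values Z1 Z2 t1 t2 \<rho> \<Longrightarrow> T \<le> x"
    unfolding ens_values_def T_def using lower[OF Z1 Z2 ab] by blast
  have "coh Z1 Z2 t1 t2 \<rho> = T" unfolding coh_def by (rule cInf_eq_minimum[OF mem low])
  then show ?thesis using sv mem by simp
qed

end
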